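(* If $g,h,gh\in\mathcal{G}$ ($g$ and $h$ are composable) then $$\mathrm{rot}(\Delta_g) = \Delta_g: H_g \to H_g \diamond H_g,$$ $$\mathrm{rot}(m_{g,h}) = \bar S_{\bar g} \circ m_{h,\bar h \bar g} \circ (\mathrm{id}_g \diamond S_{gh}) : H_h \diamond H_{gh} \to H_g.$$
   Context: Let $\mathcal{G}$ be a groupoid and $\mathcal{H}(\mathcal{G})$ the free braided monoidal category (product $\diamond$, unit $\mathbf{1}$, braiding $\gamma$) generated by a Hopf $\mathcal{G}$-algebra $H=\{H_g\}_{g\in\mathcal{G}}$ (comultiplications $\Delta_g:H_g\to H_g\diamond H_g$, counits $\epsilon_g$, multiplications $m_{g,h}:H_g\diamond H_h\to H_{gh}$, units $\eta_i$, antipodes $S_g:H_g\to H_{\bar g}$ with inverses $\bar S_g$) with a left cointegral $l=\{l_i:H_{1_i}\to\mathbf{1}\}$ and a right integral $L=\{L_g:\mathbf{1}\to H_g\}$ such that $l_i\circ L_{1_i}=\mathrm{id}_{\mathbf{1}}=l_i\circ S_{1_i}\circ L_{1_i}$. $\mathcal{H}(\mathcal{G})$ is autonomous with $H_g^\ast=H_g$, coform $\Lambda_g=\Delta_g\circ L_g:\mathbf{1}\to H_g\diamond H_g$ and form $\lambda_g=l_i\circ m_{g,\bar g}\circ(\mathrm{id}_g\diamond S_g):H_g\diamond H_g\to\mathbf{1}$ for $g\in\mathcal{G}(i,j)$. Writing $\mathrm{Mor}(A,B)$ for the morphisms $A\to B$ in $\mathcal{H}(\mathcal{G})$, the rotation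 map $\mathrm{rot}:\mathrm{Mor}(H_g\diamond A,B\diamond H_h)\to\mathrm{Mor}(A\diamond H_h,H_g\diamond B)$ is defined by $$\mathrm{rot}(F)=(\mathrm{id}_{H_g\diamond B}\diamond\lambda_h)\circ(\mathrm{id}_g\diamond F\diamond\mathrm{id}_h)\circ(\Lambda_g\diamond\mathrm{id}_{A\diamond H_h}).$$ Here $\Delta_g$ is regarded as a morphism $H_g\diamond\mathbf{1}\to H_g\diamond H_g$ and $m_{g,h}$ as a morphism $H_g\diamond H_h\to\mathbf{1}\diamond H_{gh}$. *)

theory Defs
  imports Main
begin

section \<open>Strict braided monoidal categories (all elements of type 'm are arrows)\<close>

record ('o, 'm) bmc =
  Dom :: "'m \<Rightarrow> 'o"
  Cod :: "'m \<Rightarrow> 'o"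
  Cmp :: "'m \<Rightarrow> 'm \<Rightarrow> 'm"   (* Cmp f g = f \<circ> g, meaningful when Dom f = Cod g *)
  Idm :: "'o \<Rightarrow> 'm"
  Tob :: "'o \<Rightarrow> 'o \<Rightarrow> 'o"
  Tm  :: "'m \<Rightarrow> 'm \<Rightarrow> 'm"
  Uo  :: "'o"
  Br  :: "'o \<Rightarrow> 'o \<Rightarrow> 'm"

definition strict_braided_cat :: "('o, 'm, 'z) bmc_scheme \<Rightarrow> bool" where
  "strict_braided_cat C \<longleftrightarrow>
     (\<forall>f g. Dom C f = Cod C g \<longrightarrow> Dom C (Cmp C f g) = Dom C g \<and> Cod C (Cmp C f g) = Cod C f)
   \<and> (\<forall>f g k. Dom C f = Cod C g \<longrightarrow> Dom C g = Cod C k \<longrightarrow>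
        Cmp C (Cmp C f g) k = Cmp C f (Cmp C g k))
   \<and> (\<forall>A. Dom C (Idm C A) = A \<and> Cod C (Idm C A) = A)
   \<and> (\<forall>f. Cmp C f (Idm C (Dom C f)) = f \<and> Cmp C (Idm C (Cod C f)) f = f)
   \<and> (\<forall>A B D. Tob C (Tob C A B) D = Tob C A (Tob C B D))
   \<and> (\<forall>A. Tob C (Uo C) A = A \<and> Tob C A (Uo C) = A)
   \<and> (\<forall>f g. Dom C (Tm C f g) = Tob C (Dom C f) (Dom C g) \<and> Cod C (Tm C f g) = Tob C (Cod C f) (Cod C g))
   \<and> (\<forall>f g k. Tm C (Tm C f g) k = Tm C f (Tm C g k))
   \<and> (\<forall>f. Tm C (Idm C (Uo C)) f = f \<and> Tm C f (Idm C (Uo C)) = f)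
   \<and> (\<forall>A B. Tm C (Idm C A) (Idm C B) = Idm C (Tob C A B))
   \<and> (\<forall>f g f' g'. Dom C f = Cod C f' \<longrightarrow> Dom C g = Cod C g' \<longrightarrow>
        Cmp C (Tm C f g) (Tm C f' g') = Tm C (Cmp C f f') (Cmp C g g'))
   \<and> (\<forall>A B. Dom C (Br C A B) = Tob C A B \<and> Cod C (Br C A B) = Tob C B A)
   \<and> (\<forall>f g. Cmp C (Br C (Cod C f) (Cod C g)) (Tm C f g) = Cmp C (Tm C g f) (Br C (Dom C f) (Dom C g)))
   \<and> (\<forall>A B. \<exists>k. Dom C k = Tob C B A \<and> Cod C k = Tob C A B \<and>
        Cmp C k (Br C A B) = Idm C (Tob C A B) \<and> Cmp C (Br C A B) k = Idm C (Tob C B A))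
   \<and> (\<forall>A B D. Br C A (Tob C B D) = Cmp C (Tm C (Idm C B) (Br C A D)) (Tm C (Br C A B) (Idm C D)))
   \<and> (\<forall>A B D. Br C (Tob C A B) D = Cmp C (Tm C (Br C A D) (Idm C B)) (Tm C (Idm C A) (Br C B D)))"

section \<open>Groupoids (g \<in> G(i,j) means src g = i, tgt g = j; gh defined iff tgt g = src h)\<close>

record ('g, 'i) gpd =
  src  :: "'g \<Rightarrow> 'i"
  tgt  :: "'g \<Rightarrow> 'i"
  gm   :: "'g \<Rightarrow> 'g \<Rightarrow> 'g"
  gid  :: "'i \<Rightarrow> 'g"
  ginv :: "'g \<Rightarrow> 'g"

definition groupoid :: "('g, 'i, 'z) gpd_scheme \<Rightarrow> bool" where
  "groupoid G \<longleftrightarrow>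
     (\<forall>g h. tgt G g = src G h \<longrightarrow> src G (gm G g h) = src G g \<and> tgt G (gm G g h) = tgt G h)
   \<and> (\<forall>g h k. tgt G g = src G h \<longrightarrow> tgt G h = src G k \<longrightarrow>
        gm G (gm G g h) k = gm G g (gm G h k))
   \<and> (\<forall>i. src G (gid G i) = i \<and> tgt G (gid G i) = i)
   \<and> (\<forall>g. gm G (gid G (src G g)) g = g \<and> gm G g (gid G (tgt G g)) = g)
   \<and> (\<forall>g. src G (ginv G g) = tgt G g \<and> tgt G (ginv G g) = src G g)
   \<and> (\<forall>g. gm G g (ginv G g) = gid G (src G g) \<and> gm G (ginv G g) g = gid G (tgt G g))"

record ('o, 'm, 'g, 'i) hopfG =
  HH  :: "'g \<Rightarrow> 'o"
  Dl  :: "'g \<Rightarrow> 'm"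
  ep  :: "'g \<Rightarrow> 'm"
  mu  :: "'g \<Rightarrow> 'g \<Rightarrow> 'm"
  eta :: "'i \<Rightarrow> 'm"
  Sa  :: "'g \<Rightarrow> 'm"
  Sb  :: "'g \<Rightarrow> 'm"           (* \<bar>S_g : H_g \<rightarrow> H_{\<bar>g}, inverse of S_{\<bar>g} *)
  lc  :: "'i \<Rightarrow> 'm"
  Li  :: "'g \<Rightarrow> 'm"

definition hopf_G_algebra_int ::
  "('o, 'm, 'z1) bmc_scheme \<Rightarrow> ('g, 'i, 'z2) gpd_scheme \<Rightarrow> ('o, 'm, 'g, 'i, 'z3) hopfG_scheme \<Rightarrow> bool" where
  "hopf_G_algebra_int C G X \<longleftrightarrow>
     strict_braided_cat C \<and> groupoid G
   \<comment> \<open>typing\<close>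
   \<and> (\<forall>g. Dom C (Dl X g) = HH X g \<and> Cod C (Dl X g) = Tob C (HH X g) (HH X g))
   \<and> (\<forall>g. Dom C (ep X g) = HH X g \<and> Cod C (ep X g) = Uo C)
   \<and> (\<forall>g h. tgt G g = src G h \<longrightarrow>
        Dom C (mu X g h) = Tob C (HH X g) (HH X h) \<and> Cod C (mu X g h) = HH X (gm G g h))
   \<and> (\<forall>i. Dom C (eta X i) = Uo C \<and> Cod C (eta X i) = HH X (gid G i))
   \<and> (\<forall>g. Dom C (Sa X g) = HH X g \<and> Cod C (Sa X g) = HH X (ginv G g))
   \<and> (\<forall>g. Dom C (Sb X g) = HH X g \<and> Cod C (Sb X g) = HH X (ginv G g))
   \<and> (\<forall>i. Dom C (lc X i) = HH X (gid G i) \<and> Cod C (lc X i) = Uo C)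
   \<and> (\<forall>g. Dom C (Li X g) = Uo C \<and> Cod C (Li X g) = HH X g)
   \<comment> \<open>coalgebra H_g\<close>
   \<and> (\<forall>g. Cmp C (Tm C (Dl X g) (Idm C (HH X g))) (Dl X g)
          = Cmp C (Tm C (Idm C (HH X g)) (Dl X g)) (Dl X g))
   \<and> (\<forall>g. Cmp C (Tm C (ep X g) (Idm C (HH X g))) (Dl X g) = Idm C (HH X g)
        \<and> Cmp C (Tm C (Idm C (HH X g)) (ep X g)) (Dl X g) = Idm C (HH X g))
   \<comment> \<open>G-graded algebra\<close>
   \<and> (\<forall>g h k. tgt G g = src G h \<longrightarrow> tgt G h = src G k \<longrightarrow>
        Cmp C (mu X (gm G g h) k) (Tm C (mu X g h) (Idm C (HH X k)))
        = Cmp C (mu X g (gm G h k)) (Tm C (Idm C (HH X g)) (mu X h k)))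
   \<and> (\<forall>g. Cmp C (mu X (gid G (src G g)) g) (Tm C (eta X (src G g)) (Idm C (HH X g))) = Idm C (HH X g)
        \<and> Cmp C (mu X g (gid G (tgt G g))) (Tm C (Idm C (HH X g)) (eta X (tgt G g))) = Idm C (HH X g))
   \<comment> \<open>bialgebra compatibility\<close>
   \<and> (\<forall>g h. tgt G g = src G h \<longrightarrow>
        Cmp C (Dl X (gm G g h)) (mu X g h)
        = Cmp C (Tm C (mu X g h) (mu X g h))
            (Cmp C (Tm C (Idm C (HH X g)) (Tm C (Br C (HH X g) (HH X h)) (Idm C (HH X h))))
               (Tm C (Dl X g) (Dl X h))))
   \<and> (\<forall>g h. tgt G g = src G h \<longrightarrow>
        Cmp C (ep X (gm G g h)) (mu X g h) = Tm C (ep X g) (ep X h))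
   \<and> (\<forall>i. Cmp C (Dl X (gid G i)) (eta X i) = Tm C (eta X i) (eta X i))
   \<and> (\<forall>i. Cmp C (ep X (gid G i)) (eta X i) = Idm C (Uo C))
   \<comment> \<open>antipode, and its inverse\<close>
   \<and> (\<forall>g. Cmp C (mu X g (ginv G g)) (Cmp C (Tm C (Idm C (HH X g)) (Sa X g)) (Dl X g))
          = Cmp C (eta X (src G g)) (ep X g))
   \<and> (\<forall>g. Cmp C (mu X (ginv G g) g) (Cmp C (Tm C (Sa X g) (Idm C (HH X g))) (Dl X g))
          = Cmp C (eta X (tgt G g)) (ep X g))
   \<and> (\<forall>g. Cmp C (Sa X (ginv G g)) (Sb X g) = Idm C (HH X g)
        \<and> Cmp C (Sb X g) (Sa X (ginv G g)) = Idm C (HH X (ginv G g)))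
   \<comment> \<open>left cointegral: (id \<diamond> l_i) \<Delta>_{1_i} = \<eta>_i l_i\<close>
   \<and> (\<forall>i. Cmp C (Tm C (Idm C (HH X (gid G i))) (lc X i)) (Dl X (gid G i)) = Cmp C (eta X i) (lc X i))
   \<comment> \<open>right integral: m_{g,h} (L_g \<diamond> id_h) = L_{gh} \<epsilon>_h\<close>
   \<and> (\<forall>g h. tgt G g = src G h \<longrightarrow>
        Cmp C (mu X g h) (Tm C (Li X g) (Idm C (HH X h))) = Cmp C (Li X (gm G g h)) (ep X h))
   \<comment> \<open>normalisation\<close>
   \<and> (\<forall>i. Cmp C (lc X i) (Li X (gid G i)) = Idm C (Uo C)
        \<and> Cmp C (lc X i) (Cmp C (Sa X (gid G i)) (Li X (gid G i))) = Idm C (Uo C))"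

definition coformL :: "('o, 'm, 'z1) bmc_scheme \<Rightarrow> ('o, 'm, 'g, 'i, 'z3) hopfG_scheme \<Rightarrow> 'g \<Rightarrow> 'm" where
  "coformL C X g = Cmp C (Dl X g) (Li X g)"

definition formL :: "('o, 'm, 'z1) bmc_scheme \<Rightarrow> ('g, 'i, 'z2) gpd_scheme \<Rightarrow> ('o, 'm, 'g, 'i, 'z3) hopfG_scheme \<Rightarrow> 'g \<Rightarrow> 'm" where
  "formL C G X g = Cmp C (lc X (src G g)) (Cmp C (mu X g (ginv G g)) (Tm C (Idm C (HH X g)) (Sa X g)))"

text \<open>rot : Mor(H_g \<diamond> A, B \<diamond> H_h) \<rightarrow> Mor(A \<diamond> H_h, H_g \<diamond> B)\<close>
definition rot :: "('o, 'm, 'z1) bmc_scheme \<Rightarrow> ('g, 'i, 'z2) gpd_scheme \<Rightarrow> ('o, 'm, 'g, 'i, 'z3) hopfG_scheme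
                    \<Rightarrow> 'g \<Rightarrow> 'g \<Rightarrow> 'o \<Rightarrow> 'o \<Rightarrow> 'm \<Rightarrow> 'm" where
  "rot C G X g h A B F =
     Cmp C (Tm C (Idm C (Tob C (HH X g) B)) (formL C G X h))
       (Cmp C (Tm C (Tm C (Idm C (HH X g)) F) (Idm C (HH X h)))
          (Tm C (coformL C X g) (Idm C (Tob C A (HH X h)))))"

end

theory Submission
  imports Defs
begin

locale HA =
  fixes C :: "('o,'m,'z1) bmc_scheme" and G :: "('g,'i,'z2) gpd_scheme"
    and X :: "('o,'m,'g,'i,'z3) hopfG_scheme"
  assumes H: "hopf_G_algebra_int C G X"
begin

abbreviation cmp (infixr "\<cdot>" 55) where "f \<cdot> g \<equiv> Cmp C f g"
abbreviation tm (infixr "\<diamond>" 60) where "f \<diamond> g \<equiv> Tm C f g"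
abbreviation tob (infixr "\<otimes>" 65) where "A \<otimes> B \<equiv> Tob C A B"
abbreviation "I \<equiv> Idm C"
abbreviation "U \<equiv> Uo C"

lemma SB: "strict_braided_cat C" and GP: "groupoid G"
  using H by (simp_all add: hopf_G_algebra_int_def)

lemma dom_cmp[simp]: "Dom C f = Cod C g \<Longrightarrow> Dom C (f \<cdot> g) = Dom C g"
  and cod_cmp[simp]: "Dom C f = Cod C g \<Longrightarrow> Cod C (f \<cdot> g) = Cod C f"
  using SB unfolding strict_braided_cat_def by (elim conjE, (intro conjI)?; meson)+
lemma cmp_assoc[simp]: "Dom C f = Cod C g \<Longrightarrow> Dom C g = Cod C k \<Longrightarrow> (f \<cdot> g) \<cdot> k = f \<cdot> (g \<cdot> k)"
  using SB unfolding strict_braided_cat_def by (elim conjE; meson)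
lemma dom_id[simp]: "Dom C (I A) = A" and cod_id[simp]: "Cod C (I A) = A"
  using SB unfolding strict_braided_cat_def by (elim conjE, (intro conjI)?; meson)+
lemma id_r0: "f \<cdot> I (Dom C f) = f" and id_l0: "I (Cod C f) \<cdot> f = f"
  using SB unfolding strict_braided_cat_def by (elim conjE, (intro conjI)?; meson)+
lemma id_r[simp]: "A = Dom C f \<Longrightarrow> f \<cdot> I A = f" using id_r0 by simp
lemma id_l[simp]: "A = Cod C f \<Longrightarrow> I A \<cdot> f = f" using id_l0 by simp
lemma tob_assoc[simp]: "(A \<otimes> B) \<otimes> D = A \<otimes> (B \<otimes> D)"
  using SB unfolding strict_braided_cat_def by (elim conjE; meson)
lemma tob_U[simp]: "U \<otimes> A = A" "A \<otimes> U = A"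
  using SB unfolding strict_braided_cat_def by (elim conjE, (intro conjI)?; meson)+
lemma dom_tm[simp]: "Dom C (f \<diamond> g) = Dom C f \<otimes> Dom C g" and cod_tm[simp]: "Cod C (f \<diamond> g) = Cod C f \<otimes> Cod C g"
  using SB unfolding strict_braided_cat_def by (elim conjE, (intro conjI)?; meson)+
lemma tm_assoc[simp]: "(f \<diamond> g) \<diamond> k = f \<diamond> (g \<diamond> k)"
  using SB unfolding strict_braided_cat_def by (elim conjE; meson)
lemma tm_U[simp]: "I U \<diamond> f = f" "f \<diamond> I U = f"
  using SB unfolding strict_braided_cat_def by (elim conjE, (intro conjI)?; meson)+
lemma tm_id[simp]: "I A \<diamond> I B = I (A \<otimes> B)"
  using SB unfolding strict_braided_cat_def by (elim conjE; meson)
lemma interchange: "Dom C f = Cod C f' \<Longrightarrow> Dom C g = Cod C g' \<Longrightarrow> (f \<diamond> g) \<cdot> (f' \<diamond> g') = (f \<cdot> f') \<diamond> (g \<cdot> g')"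
  using SB unfolding strict_braided_cat_def by (elim conjE; meson)
lemma dom_br[simp]: "Dom C (Br C A B) = A \<otimes> B" and cod_br[simp]: "Cod C (Br C A B) = B \<otimes> A"
  using SB unfolding strict_braided_cat_def by (elim conjE, (intro conjI)?; meson)+
lemma br_nat: "Br C (Cod C f) (Cod C g) \<cdot> (f \<diamond> g) = (g \<diamond> f) \<cdot> Br C (Dom C f) (Dom C g)"
  using SB unfolding strict_braided_cat_def by (elim conjE; meson)
lemma br_inv: "\<exists>k. Dom C k = B \<otimes> A \<and> Cod C k = A \<otimes> B \<and> k \<cdot> Br C A B = I (A \<otimes> B) \<and> Br C A B \<cdot> k = I (B \<otimes> A)"
  using SB unfolding strict_braided_cat_def by (elim conjE; meson)
lemma hex1: "Br C A (B \<otimes> D) = (I B \<diamond> Br C A D) \<cdot> (Br C A B \<diamond> I D)"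
  using SB unfolding strict_braided_cat_def by (elim conjE; meson)
lemma hex2: "Br C (A \<otimes> B) D = (Br C A D \<diamond> I B) \<cdot> (I A \<diamond> Br C B D)"
  using SB unfolding strict_braided_cat_def by (elim conjE; meson)

lemma br_UL[simp]: "Br C U A = I A"
proof -
  have e: "Br C U A = Br C U A \<cdot> Br C U A"
    using hex2[of U U A] by simp
  obtain k where k: "Dom C k = A" "Cod C k = A" "k \<cdot> Br C U A = I A" 
    using br_inv[where A=U and B=A] by auto
  have "I A = k \<cdot> (Br C U A \<cdot> Br C U A)" using e k by simp
  also have "\<dots> = (k \<cdot> Br C U A) \<cdot> Br C U A" using k by (subst cmp_assoc) simp_all
  also have "\<dots> = Br C U A" using k by (simp del: cmp_assoc)
  finally show ?thesis by simp
qed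

lemma br_UR[simp]: "Br C A U = I A"
proof -
  have e: "Br C A U = Br C A U \<cdot> Br C A U"
    using hex1[of A U U] by simp
  obtain k where k: "Dom C k = A" "Cod C k = A" "k \<cdot> Br C A U = I A" 
    using br_inv[where A=A and B=U] by auto
  have "I A = k \<cdot> (Br C A U \<cdot> Br C A U)" using e k by simp
  also have "\<dots> = (k \<cdot> Br C A U) \<cdot> Br C A U" using k by (subst cmp_assoc) simp_all
  also have "\<dots> = Br C A U" using k by (simp del: cmp_assoc)
  finally show ?thesis by simp
qed

lemma GPs: "(\<forall>g h. tgt G g = src G h \<longrightarrow> src G (gm G g h) = src G g \<and> tgt G (gm G g h) = tgt G h)
   \<and> (\<forall>g h k. tgt G g = src G h \<longrightarrow> tgt G h = src G k \<longrightarrow>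
        gm G (gm G g h) k = gm G g (gm G h k))
   \<and> (\<forall>i. src G (gid G i) = i \<and> tgt G (gid G i) = i)
   \<and> (\<forall>g. gm G (gid G (src G g)) g = g \<and> gm G g (gid G (tgt G g)) = g)
   \<and> (\<forall>g. src G (ginv G g) = tgt G g \<and> tgt G (ginv G g) = src G g)
   \<and> (\<forall>g. gm G g (ginv G g) = gid G (src G g) \<and> gm G (ginv G g) g = gid G (tgt G g))"
  using GP unfolding groupoid_def by blast

lemma src_gm[simp]: "tgt G g = src G h \<Longrightarrow> src G (gm G g h) = src G g"
  and tgt_gm[simp]: "tgt G g = src G h \<Longrightarrow> tgt G (gm G g h) = tgt G h"
  using GPs by blast+
lemma gm_assoc: "tgt G g = src G h \<Longrightarrow> tgt G h = src G k \<Longrightarrow> gm G (gm G g h) k = gm G g (gm G h k)"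
  using GPs by blast
lemma src_gid[simp]: "src G (gid G i) = i" and tgt_gid[simp]: "tgt G (gid G i) = i"
  using GPs by blast+
lemma gm_gid_l[simp]: "src G g = i \<Longrightarrow> gm G (gid G i) g = g"
  and gm_gid_r[simp]: "tgt G g = i \<Longrightarrow> gm G g (gid G i) = g"
  using GPs by blast+
lemma src_ginv[simp]: "src G (ginv G g) = tgt G g" and tgt_ginv[simp]: "tgt G (ginv G g) = src G g"
  using GPs by blast+
lemma gm_inv_r[simp]: "gm G g (ginv G g) = gid G (src G g)"
  and gm_inv_l[simp]: "gm G (ginv G g) g = gid G (tgt G g)"
  using GPs by blast+
lemma ginv_ginv[simp]: "ginv G (ginv G g) = g"
proof -
  have "ginv G (ginv G g) = gm G (ginv G (ginv G g)) (gm G (ginv G g) g)"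
    by simp
  also have "\<dots> = gm G (gm G (ginv G (ginv G g)) (ginv G g)) g"
    by (rule gm_assoc[symmetric]) simp_all
  also have "\<dots> = g" by simp
  finally show ?thesis .
qed
lemma ginv_gm[simp]: assumes "tgt G g = src G h" shows "ginv G (gm G g h) = gm G (ginv G h) (ginv G g)"
proof -
  let ?x = "gm G g h"
  have e1: "gm G h (gm G (ginv G h) (ginv G g)) = ginv G g"
    using assms by (subst gm_assoc[symmetric]) simp_all
  have e2: "gm G ?x (gm G (ginv G h) (ginv G g)) = gid G (src G g)"
    using assms by (subst gm_assoc) (simp_all add: e1)
  have "ginv G ?x = gm G (ginv G ?x) (gm G ?x (gm G (ginv G h) (ginv G g)))"
    using assms by (simp add: e2)
  also have "\<dots> = gm G (gm G (ginv G ?x) ?x) (gm G (ginv G h) (ginv G g))"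
    using assms by (subst gm_assoc) simp_all
  also have "\<dots> = gm G (ginv G h) (ginv G g)" using assms by simp
  finally show ?thesis .
qed

lemma gm_cancel[simp]: "src G k = src G h \<Longrightarrow> gm G h (gm G (ginv G h) k) = k"
  by (subst gm_assoc[symmetric]) simp_all

lemma gm_inv_prod[simp]: "tgt G g = src G h \<Longrightarrow> gm G (gm G g h) (gm G (ginv G h) (ginv G g)) = gid G (src G g)"
  by (metis ginv_gm gm_inv_r src_gm)

lemma HS: "(\<forall>g. Dom C (Dl X g) = HH X g \<and> Cod C (Dl X g) = Tob C (HH X g) (HH X g))
   \<and> (\<forall>g. Dom C (ep X g) = HH X g \<and> Cod C (ep X g) = Uo C)
   \<and> (\<forall>g h. tgt G g = src G h \<longrightarrow>
        Dom C (mu X g h) = Tob C (HH X g) (HH X h) \<and> Cod C (mu X g h) = HH X (gm G g h))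
   \<and> (\<forall>i. Dom C (eta X i) = Uo C \<and> Cod C (eta X i) = HH X (gid G i))
   \<and> (\<forall>g. Dom C (Sa X g) = HH X g \<and> Cod C (Sa X g) = HH X (ginv G g))
   \<and> (\<forall>g. Dom C (Sb X g) = HH X g \<and> Cod C (Sb X g) = HH X (ginv G g))
   \<and> (\<forall>i. Dom C (lc X i) = HH X (gid G i) \<and> Cod C (lc X i) = Uo C)
   \<and> (\<forall>g. Dom C (Li X g) = Uo C \<and> Cod C (Li X g) = HH X g)
   \<and> (\<forall>g. Cmp C (Tm C (Dl X g) (Idm C (HH X g))) (Dl X g)
          = Cmp C (Tm C (Idm C (HH X g)) (Dl X g)) (Dl X g))
   \<and> (\<forall>g. Cmp C (Tm C (ep X g) (Idm C (HH X g))) (Dl X g) = Idm C (HH X g)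
        \<and> Cmp C (Tm C (Idm C (HH X g)) (ep X g)) (Dl X g) = Idm C (HH X g))
   \<and> (\<forall>g h k. tgt G g = src G h \<longrightarrow> tgt G h = src G k \<longrightarrow>
        Cmp C (mu X (gm G g h) k) (Tm C (mu X g h) (Idm C (HH X k)))
        = Cmp C (mu X g (gm G h k)) (Tm C (Idm C (HH X g)) (mu X h k)))
   \<and> (\<forall>g. Cmp C (mu X (gid G (src G g)) g) (Tm C (eta X (src G g)) (Idm C (HH X g))) = Idm C (HH X g)
        \<and> Cmp C (mu X g (gid G (tgt G g))) (Tm C (Idm C (HH X g)) (eta X (tgt G g))) = Idm C (HH X g))
   \<and> (\<forall>g h. tgt G g = src G h \<longrightarrow>
        Cmp C (Dl X (gm G g h)) (mu X g h)
        = Cmp C (Tm C (mu X g h) (mu X g h))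
            (Cmp C (Tm C (Idm C (HH X g)) (Tm C (Br C (HH X g) (HH X h)) (Idm C (HH X h))))
               (Tm C (Dl X g) (Dl X h))))
   \<and> (\<forall>g. Cmp C (mu X g (ginv G g)) (Cmp C (Tm C (Idm C (HH X g)) (Sa X g)) (Dl X g))
          = Cmp C (eta X (src G g)) (ep X g))
   \<and> (\<forall>g. Cmp C (Sa X (ginv G g)) (Sb X g) = Idm C (HH X g)
        \<and> Cmp C (Sb X g) (Sa X (ginv G g)) = Idm C (HH X (ginv G g)))
   \<and> (\<forall>i. Cmp C (Tm C (Idm C (HH X (gid G i))) (lc X i)) (Dl X (gid G i)) = Cmp C (eta X i) (lc X i))
   \<and> (\<forall>g h. tgt G g = src G h \<longrightarrow>
        Cmp C (mu X g h) (Tm C (Li X g) (Idm C (HH X h))) = Cmp C (Li X (gm G g h)) (ep X h))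
   \<and> (\<forall>i. Cmp C (lc X i) (Li X (gid G i)) = Idm C (Uo C))"
  using H unfolding hopf_G_algebra_int_def by (elim conjE; intro conjI; (assumption | blast))

lemma ty_Dl[simp]: "Dom C (Dl X g) = HH X g" "Cod C (Dl X g) = HH X g \<otimes> HH X g"
  and ty_ep[simp]: "Dom C (ep X g) = HH X g" "Cod C (ep X g) = U"
  and ty_eta[simp]: "Dom C (eta X i) = U" "Cod C (eta X i) = HH X (gid G i)"
  and ty_Sa[simp]: "Dom C (Sa X g) = HH X g" "Cod C (Sa X g) = HH X (ginv G g)"
  and ty_Sb[simp]: "Dom C (Sb X g) = HH X g" "Cod C (Sb X g) = HH X (ginv G g)"
  and ty_lc[simp]: "Dom C (lc X i) = HH X (gid G i)" "Cod C (lc X i) = U"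
  and ty_Li[simp]: "Dom C (Li X g) = U" "Cod C (Li X g) = HH X g"
  using HS by (elim conjE, (intro conjI)?; meson)+
lemma ty_mu[simp]: "tgt G g = src G h \<Longrightarrow> Dom C (mu X g h) = HH X g \<otimes> HH X h"
   "tgt G g = src G h \<Longrightarrow> Cod C (mu X g h) = HH X (gm G g h)"
  using HS by (elim conjE, (intro conjI)?; meson)+

lemma coassoc: "(Dl X g \<diamond> I (HH X g)) \<cdot> Dl X g = (I (HH X g) \<diamond> Dl X g) \<cdot> Dl X g"
  using HS by (elim conjE; meson)
lemma counit_l: "(ep X g \<diamond> I (HH X g)) \<cdot> Dl X g = I (HH X g)"
  and counit_r: "(I (HH X g) \<diamond> ep X g) \<cdot> Dl X g = I (HH X g)"
  using HS by (elim conjE, (intro conjI)?; meson)+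
lemma massoc: "tgt G g = src G h \<Longrightarrow> tgt G h = src G k \<Longrightarrow>
        mu X (gm G g h) k \<cdot> (mu X g h \<diamond> I (HH X k)) = mu X g (gm G h k) \<cdot> (I (HH X g) \<diamond> mu X h k)"
  using HS by (elim conjE; meson)
lemma unit_l: "mu X (gid G (src G g)) g \<cdot> (eta X (src G g) \<diamond> I (HH X g)) = I (HH X g)"
  and unit_r: "mu X g (gid G (tgt G g)) \<cdot> (I (HH X g) \<diamond> eta X (tgt G g)) = I (HH X g)"
  using HS by (elim conjE, (intro conjI)?; meson)+
lemma bialg: "tgt G g = src G h \<Longrightarrow> Dl X (gm G g h) \<cdot> mu X g h
        = (mu X g h \<diamond> mu X g h) \<cdot> (I (HH X g) \<diamond> Br C (HH X g) (HH X h) \<diamond> I (HH X h)) \<cdot> (Dl X g \<diamond> Dl X h)"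
  using HS by (elim conjE; meson)
lemma anti_r: "mu X g (ginv G g) \<cdot> (I (HH X g) \<diamond> Sa X g) \<cdot> Dl X g = eta X (src G g) \<cdot> ep X g"
  using HS by (elim conjE; meson)
lemma Sinv: "Sa X (ginv G g) \<cdot> Sb X g = I (HH X g)"
  using HS by (elim conjE; meson)
lemma coint: "(I (HH X (gid G i)) \<diamond> lc X i) \<cdot> Dl X (gid G i) = eta X i \<cdot> lc X i"
  using HS by (elim conjE; meson)
lemma rint: "tgt G g = src G h \<Longrightarrow> mu X g h \<cdot> (Li X g \<diamond> I (HH X h)) = Li X (gm G g h) \<cdot> ep X h"
  using HS by (elim conjE; meson)
lemma norm: "lc X i \<cdot> Li X (gid G i) = I U"
  using HS by (elim conjE; meson)

lemma tm_split1: "f \<diamond> k = (f \<diamond> I (Cod C k)) \<cdot> (I (Dom C f) \<diamond> k)"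
  by (subst interchange) simp_all
lemma tm_split2: "f \<diamond> k = (I (Cod C f) \<diamond> k) \<cdot> (f \<diamond> I (Dom C k))"
  by (subst interchange) simp_all


lemma tm_cmp_r: "Dom C x = Cod C k \<Longrightarrow> f \<diamond> (x \<cdot> k) = (I (Cod C f) \<diamond> x) \<cdot> (f \<diamond> k)"
  by (subst interchange) simp_all
lemma tm_cmp_l: "Dom C x = Cod C y \<Longrightarrow> (x \<cdot> y) \<diamond> k = (x \<diamond> I (Cod C k)) \<cdot> (y \<diamond> k)"
  by (subst interchange) simp_all
lemma slide: "(f \<diamond> I (Cod C k)) \<cdot> (I (Dom C f) \<diamond> k) = (I (Cod C f) \<diamond> k) \<cdot> (f \<diamond> I (Dom C k))"
  using tm_split1 tm_split2 by metis
lemma cmp_cong4: "x \<cdot> y = z \<cdot> w \<Longrightarrow> Dom C x = Cod C y \<Longrightarrow> Dom C z = Cod C w \<Longrightarrow> Dom C y = Cod C k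
   \<Longrightarrow> x \<cdot> (y \<cdot> k) = z \<cdot> (w \<cdot> k)"
proof -
  assume a: "x \<cdot> y = z \<cdot> w" "Dom C x = Cod C y" "Dom C z = Cod C w" "Dom C y = Cod C k"
  have "Dom C w = Cod C k" using a by (metis dom_cmp)
  then show ?thesis using a by (metis cmp_assoc)
qed
lemma cmp_cong3: "x \<cdot> y = z \<Longrightarrow> Dom C x = Cod C y \<Longrightarrow> Dom C y = Cod C k
   \<Longrightarrow> x \<cdot> (y \<cdot> k) = z \<cdot> k"
  by (metis cmp_assoc)

lemma tm_id2[simp]: "I A \<diamond> (I B \<diamond> f) = I (A \<otimes> B) \<diamond> f"
  by (metis tm_assoc tm_id)
lemma ty_coform[simp]: "Dom C (coformL C X g) = U" "Cod C (coformL C X g) = HH X g \<otimes> HH X g"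
  by (simp_all add: coformL_def)
lemma ty_form[simp]: "Dom C (formL C G X g) = HH X g \<otimes> HH X g" "Cod C (formL C G X g) = U"
  by (simp_all add: formL_def)

end
context HA begin

lemma snake:
  "(I (HH X g) \<diamond> formL C G X g) \<cdot> (coformL C X g \<diamond> I (HH X g)) = I (HH X g)"
proof -
  let ?i = "src G g"
  let ?e = "gid G ?i"
  let ?Hg = "HH X g"
  let ?H1 = "HH X ?e"
  let ?m = "mu X ?e g"
  let ?P = "mu X g (ginv G g) \<cdot> (I ?Hg \<diamond> Sa X g)"
  let ?l = "lc X ?i"
  let ?B = "Br C ?H1 ?Hg"
  let ?Le = "coformL C X ?e"
  let ?lam = "formL C G X g"
  let ?M = "?m \<diamond> ?m"
  let ?BB = "I ?H1 \<diamond> ?B \<diamond> I ?Hg"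
  let ?D = "Dl X ?e \<diamond> Dl X g"
  let ?Y = "?l \<cdot> mu X ?e ?e \<cdot> (I ?H1 \<diamond> ?P)"
  have lam: "?lam = ?l \<cdot> ?P" by (simp add: formL_def)
  have s1: "coformL C X g \<diamond> I ?Hg = (Dl X g \<diamond> I ?Hg) \<cdot> (Li X g \<diamond> I ?Hg)"
    by (simp add: coformL_def interchange)
  have s2: "Li X g \<diamond> I ?Hg = ((?m \<cdot> (Li X ?e \<diamond> I ?Hg)) \<diamond> I ?Hg) \<cdot> Dl X g"
  proof -
    have r: "?m \<cdot> (Li X ?e \<diamond> I ?Hg) = Li X g \<cdot> ep X g" using rint[of ?e g] by simp
    have "(Li X g \<cdot> ep X g) \<diamond> I ?Hg = (Li X g \<diamond> I ?Hg) \<cdot> (ep X g \<diamond> I ?Hg)"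
      by (simp add: interchange)
    then show ?thesis by (simp add: r counit_l)
  qed
  have s3: "(Dl X g \<diamond> I ?Hg) \<cdot> ((?m \<cdot> (Li X ?e \<diamond> I ?Hg)) \<diamond> I ?Hg) \<cdot> Dl X g
      = ((Dl X g \<cdot> ?m) \<diamond> I ?Hg) \<cdot> (Li X ?e \<diamond> Dl X g)"
  proof -
    have a: "Li X ?e \<diamond> Dl X g = ((Li X ?e \<diamond> I ?Hg) \<diamond> I ?Hg) \<cdot> Dl X g"
      using tm_split1[of "Li X ?e" "Dl X g"] by simp
    have b: "((Dl X g \<cdot> ?m) \<diamond> I ?Hg) \<cdot> ((Li X ?e \<diamond> I ?Hg) \<diamond> I ?Hg) = (Dl X g \<cdot> ?m \<cdot> (Li X ?e \<diamond> I ?Hg)) \<diamond> I ?Hg"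
      by (subst interchange) simp_all
    have c: "(Dl X g \<diamond> I ?Hg) \<cdot> ((?m \<cdot> (Li X ?e \<diamond> I ?Hg)) \<diamond> I ?Hg) = (Dl X g \<cdot> ?m \<cdot> (Li X ?e \<diamond> I ?Hg)) \<diamond> I ?Hg"
      by (subst interchange) simp_all
    have "(Dl X g \<diamond> I ?Hg) \<cdot> ((?m \<cdot> (Li X ?e \<diamond> I ?Hg)) \<diamond> I ?Hg) \<cdot> Dl X g
       = ((Dl X g \<diamond> I ?Hg) \<cdot> ((?m \<cdot> (Li X ?e \<diamond> I ?Hg)) \<diamond> I ?Hg)) \<cdot> Dl X g"
      by (rule cmp_assoc[symmetric]) simp_all
    also have "\<dots> = (((Dl X g \<cdot> ?m) \<diamond> I ?Hg) \<cdot> ((Li X ?e \<diamond> I ?Hg) \<diamond> I ?Hg)) \<cdot> Dl X g"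
      by (simp only: b c)
    also have "\<dots> = ((Dl X g \<cdot> ?m) \<diamond> I ?Hg) \<cdot> (((Li X ?e \<diamond> I ?Hg) \<diamond> I ?Hg) \<cdot> Dl X g)"
      by (rule cmp_assoc) simp_all
    also have "\<dots> = ((Dl X g \<cdot> ?m) \<diamond> I ?Hg) \<cdot> (Li X ?e \<diamond> Dl X g)"
      by (simp only: a)
    finally show ?thesis .
  qed
  have s4: "Dl X g \<cdot> ?m = ?M \<cdot> ?BB \<cdot> ?D"
    using bialg[of ?e g] by simp
  have p2: "(?M \<cdot> ?BB \<cdot> ?D) \<diamond> I ?Hg = (?M \<diamond> I ?Hg) \<cdot> (?BB \<diamond> I ?Hg) \<cdot> (?D \<diamond> I ?Hg)"
    by (simp add: tm_cmp_l)
  have p1: "(I ?Hg \<diamond> ?lam) \<cdot> (?M \<diamond> I ?Hg) = ?m \<diamond> (?lam \<cdot> (?m \<diamond> I ?Hg))"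
    by (simp only: tm_assoc) (subst interchange; simp)
  have p3: "(?D \<diamond> I ?Hg) \<cdot> (Li X ?e \<diamond> Dl X g) = ?Le \<diamond> ((I ?Hg \<diamond> Dl X g) \<cdot> Dl X g)"
    by (simp add: interchange coformL_def coassoc)
  have p4: "?lam \<cdot> (?m \<diamond> I ?Hg) = ?Y"
  proof -
    let ?gi = "ginv G g"
    have a: "(I ?Hg \<diamond> Sa X g) \<cdot> (?m \<diamond> I ?Hg) = (?m \<diamond> I (HH X ?gi)) \<cdot> (I (?H1 \<otimes> ?Hg) \<diamond> Sa X g)"
      using slide[of ?m "Sa X g"] by simp
    have b: "mu X g ?gi \<cdot> (?m \<diamond> I (HH X ?gi)) = mu X ?e ?e \<cdot> (I ?H1 \<diamond> mu X g ?gi)"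
      using massoc[of ?e g ?gi] by simp
    have c0: "(I ?H1 \<diamond> mu X g ?gi) \<cdot> (I ?H1 \<diamond> (I ?Hg \<diamond> Sa X g)) = I ?H1 \<diamond> ?P"
      by (subst interchange) simp_all
    have c: "(I ?H1 \<diamond> mu X g ?gi) \<cdot> (I (?H1 \<otimes> ?Hg) \<diamond> Sa X g) = I ?H1 \<diamond> ?P"
      using c0 by simp
    have "?lam \<cdot> (?m \<diamond> I ?Hg) = ?l \<cdot> mu X g ?gi \<cdot> (I ?Hg \<diamond> Sa X g) \<cdot> (?m \<diamond> I ?Hg)"
      by (simp add: lam)
    also have "\<dots> = ?l \<cdot> mu X g ?gi \<cdot> (?m \<diamond> I (HH X ?gi)) \<cdot> (I (?H1 \<otimes> ?Hg) \<diamond> Sa X g)"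
      by (simp only: a)
    also have "\<dots> = ?l \<cdot> mu X ?e ?e \<cdot> (I ?H1 \<diamond> mu X g ?gi) \<cdot> (I (?H1 \<otimes> ?Hg) \<diamond> Sa X g)"
      by (subst cmp_cong4[OF b]) simp_all
    also have "\<dots> = ?Y"
      by (simp only: c)
    finally show ?thesis .
  qed
  have p5: "(?BB \<diamond> I ?Hg) \<cdot> (?Le \<diamond> ((I ?Hg \<diamond> Dl X g) \<cdot> Dl X g))
     = (I (?H1 \<otimes> ?Hg) \<diamond> I ?H1 \<diamond> Dl X g) \<cdot> ?BB \<cdot> (?Le \<diamond> Dl X g)"
  proof -
    have a: "?Le \<diamond> ((I ?Hg \<diamond> Dl X g) \<cdot> Dl X g) = (I (?H1 \<otimes> ?H1 \<otimes> ?Hg) \<diamond> Dl X g) \<cdot> (?Le \<diamond> Dl X g)"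
      using tm_cmp_r[of "I ?Hg \<diamond> Dl X g" "Dl X g" ?Le] by simp
    have b: "(I ?H1 \<diamond> ?B \<diamond> I (?Hg \<otimes> ?Hg)) \<cdot> (I (?H1 \<otimes> ?H1 \<otimes> ?Hg) \<diamond> Dl X g)
        = (I (?H1 \<otimes> ?Hg \<otimes> ?H1) \<diamond> Dl X g) \<cdot> ?BB"
      using slide[of "I ?H1 \<diamond> ?B" "Dl X g"] by simp
    have "(?BB \<diamond> I ?Hg) \<cdot> (?Le \<diamond> ((I ?Hg \<diamond> Dl X g) \<cdot> Dl X g))
      = (I ?H1 \<diamond> ?B \<diamond> I (?Hg \<otimes> ?Hg)) \<cdot> (I (?H1 \<otimes> ?H1 \<otimes> ?Hg) \<diamond> Dl X g) \<cdot> (?Le \<diamond> Dl X g)"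
      by (simp only: a tm_assoc tm_id)
    also have "\<dots> = (I (?H1 \<otimes> ?Hg \<otimes> ?H1) \<diamond> Dl X g) \<cdot> ?BB \<cdot> (?Le \<diamond> Dl X g)"
      by (subst cmp_cong4[OF b]) simp_all
    also have "\<dots> = (I (?H1 \<otimes> ?Hg) \<diamond> I ?H1 \<diamond> Dl X g) \<cdot> ?BB \<cdot> (?Le \<diamond> Dl X g)"
      by simp
    finally show ?thesis .
  qed
  have p6: "(?m \<diamond> ?Y) \<cdot> (I (?H1 \<otimes> ?Hg) \<diamond> I ?H1 \<diamond> Dl X g) = ?m \<diamond> (?l \<cdot> mu X ?e ?e \<cdot> (I ?H1 \<diamond> (?P \<cdot> Dl X g)))"
    by (subst interchange) (simp_all add: interchange)
  have p7: "?l \<cdot> mu X ?e ?e \<cdot> (I ?H1 \<diamond> (?P \<cdot> Dl X g)) = ?l \<diamond> ep X g"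
  proof -
    have a: "?P \<cdot> Dl X g = eta X ?i \<cdot> ep X g" using anti_r[of g] by simp
    have b: "I ?H1 \<diamond> (eta X ?i \<cdot> ep X g) = (I ?H1 \<diamond> eta X ?i) \<cdot> (I ?H1 \<diamond> ep X g)"
      by (subst interchange) simp_all
    have c: "mu X ?e ?e \<cdot> (I ?H1 \<diamond> eta X ?i) = I ?H1" using unit_r[of ?e] by simp
    have c2: "mu X ?e ?e \<cdot> ((I ?H1 \<diamond> eta X ?i) \<cdot> (I ?H1 \<diamond> ep X g)) = I ?H1 \<diamond> ep X g"
      by (subst cmp_cong3[OF c]) simp_all
    have d: "?l \<diamond> ep X g = ?l \<cdot> (I ?H1 \<diamond> ep X g)"
      using tm_split1[of ?l "ep X g"] by simp
    show ?thesis by (simp only: a b c2 d)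
  qed
  have p8: "(?m \<diamond> ?l \<diamond> ep X g) \<cdot> ?BB \<cdot> (?Le \<diamond> Dl X g) = (?m \<diamond> ?l) \<cdot> (I ?H1 \<diamond> ?B) \<cdot> (?Le \<diamond> I ?Hg)"
  proof -
    have q1: "?m \<diamond> ?l \<diamond> ep X g = (?m \<diamond> ?l) \<cdot> (I (?H1 \<otimes> ?Hg \<otimes> ?H1) \<diamond> ep X g)"
      using tm_split1[of "?m \<diamond> ?l" "ep X g"] by simp
    have q2: "(I (?H1 \<otimes> ?Hg \<otimes> ?H1) \<diamond> ep X g) \<cdot> ?BB = (I ?H1 \<diamond> ?B) \<cdot> (I (?H1 \<otimes> ?H1 \<otimes> ?Hg) \<diamond> ep X g)"
      using slide[of "I ?H1 \<diamond> ?B" "ep X g"] by simp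
    have q30: "(I (?H1 \<otimes> ?H1) \<diamond> (I ?Hg \<diamond> ep X g)) \<cdot> (?Le \<diamond> Dl X g) = ?Le \<diamond> I ?Hg"
      by (subst interchange) (simp_all add: counit_r)
    have q3: "(I (?H1 \<otimes> ?H1 \<otimes> ?Hg) \<diamond> ep X g) \<cdot> (?Le \<diamond> Dl X g) = ?Le \<diamond> I ?Hg"
      using q30 by simp
    have "(?m \<diamond> ?l \<diamond> ep X g) \<cdot> ?BB \<cdot> (?Le \<diamond> Dl X g)
       = ((?m \<diamond> ?l) \<cdot> (I (?H1 \<otimes> ?Hg \<otimes> ?H1) \<diamond> ep X g)) \<cdot> ?BB \<cdot> (?Le \<diamond> Dl X g)"
      by (simp only: q1)
    also have "\<dots> = (?m \<diamond> ?l) \<cdot> (I (?H1 \<otimes> ?Hg \<otimes> ?H1) \<diamond> ep X g) \<cdot> ?BB \<cdot> (?Le \<diamond> Dl X g)"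
      by (rule cmp_assoc) simp_all
    also have "\<dots> = (?m \<diamond> ?l) \<cdot> (I ?H1 \<diamond> ?B) \<cdot> (I (?H1 \<otimes> ?H1 \<otimes> ?Hg) \<diamond> ep X g) \<cdot> (?Le \<diamond> Dl X g)"
      by (subst cmp_cong4[OF q2]) simp_all
    also have "\<dots> = (?m \<diamond> ?l) \<cdot> (I ?H1 \<diamond> ?B) \<cdot> (?Le \<diamond> I ?Hg)"
      by (simp only: q3)
    finally show ?thesis .
  qed
  have p9: "(?m \<diamond> ?l) \<cdot> (I ?H1 \<diamond> ?B) \<cdot> (?Le \<diamond> I ?Hg) = ?m \<cdot> (I ?H1 \<diamond> ?l \<diamond> I ?Hg) \<cdot> (?Le \<diamond> I ?Hg)"
  proof -
    have r1: "?m \<diamond> ?l = ?m \<cdot> (I (?H1 \<otimes> ?Hg) \<diamond> ?l)"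
      using tm_split1[of ?m ?l] by simp
    have r2: "(I ?Hg \<diamond> ?l) \<cdot> ?B = ?l \<diamond> I ?Hg"
      using br_nat[of ?l "I ?Hg"] by simp
    have r30: "(I ?H1 \<diamond> (I ?Hg \<diamond> ?l)) \<cdot> (I ?H1 \<diamond> ?B) = I ?H1 \<diamond> ((I ?Hg \<diamond> ?l) \<cdot> ?B)"
      by (subst interchange) simp_all
    have r3: "(I (?H1 \<otimes> ?Hg) \<diamond> ?l) \<cdot> (I ?H1 \<diamond> ?B) = I ?H1 \<diamond> ?l \<diamond> I ?Hg"
      using r30 by (simp add: r2)
    have "(?m \<diamond> ?l) \<cdot> (I ?H1 \<diamond> ?B) \<cdot> (?Le \<diamond> I ?Hg) = (?m \<cdot> (I (?H1 \<otimes> ?Hg) \<diamond> ?l)) \<cdot> (I ?H1 \<diamond> ?B) \<cdot> (?Le \<diamond> I ?Hg)"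
      by (simp only: r1)
    also have "\<dots> = ?m \<cdot> (I (?H1 \<otimes> ?Hg) \<diamond> ?l) \<cdot> (I ?H1 \<diamond> ?B) \<cdot> (?Le \<diamond> I ?Hg)"
      by (rule cmp_assoc) simp_all
    also have "\<dots> = ?m \<cdot> (I ?H1 \<diamond> ?l \<diamond> I ?Hg) \<cdot> (?Le \<diamond> I ?Hg)"
      by (subst cmp_cong3[OF r3]) simp_all
    finally show ?thesis .
  qed
  have p10: "?m \<cdot> (I ?H1 \<diamond> ?l \<diamond> I ?Hg) \<cdot> (?Le \<diamond> I ?Hg) = I ?Hg"
  proof -
    have t1: "((I ?H1 \<diamond> ?l) \<diamond> I ?Hg) \<cdot> (?Le \<diamond> I ?Hg) = ((I ?H1 \<diamond> ?l) \<cdot> ?Le) \<diamond> I ?Hg"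
      by (subst interchange) simp_all
    have t20: "(I ?H1 \<diamond> ?l) \<cdot> ?Le = (eta X ?i \<cdot> ?l) \<cdot> Li X ?e"
      unfolding coformL_def by (rule cmp_cong3[OF coint]) simp_all
    have t2: "(I ?H1 \<diamond> ?l) \<cdot> ?Le = eta X ?i"
      using t20 norm[of ?i] by simp
    have t3: "?m \<cdot> (eta X ?i \<diamond> I ?Hg) = I ?Hg" using unit_l[of g] by simp
    show ?thesis using t1 t2 t3 by simp
  qed
  have "(I ?Hg \<diamond> ?lam) \<cdot> (coformL C X g \<diamond> I ?Hg) = (I ?Hg \<diamond> ?lam) \<cdot> (Dl X g \<diamond> I ?Hg) \<cdot> (Li X g \<diamond> I ?Hg)"
    by (simp only: s1)
  also have "\<dots> = (I ?Hg \<diamond> ?lam) \<cdot> (Dl X g \<diamond> I ?Hg) \<cdot> ((?m \<cdot> (Li X ?e \<diamond> I ?Hg)) \<diamond> I ?Hg) \<cdot> Dl X g"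
    by (simp only: s2)
  also have "\<dots> = (I ?Hg \<diamond> ?lam) \<cdot> ((Dl X g \<cdot> ?m) \<diamond> I ?Hg) \<cdot> (Li X ?e \<diamond> Dl X g)"
    by (simp only: s3)
  also have "\<dots> = (I ?Hg \<diamond> ?lam) \<cdot> ((?M \<cdot> ?BB \<cdot> ?D) \<diamond> I ?Hg) \<cdot> (Li X ?e \<diamond> Dl X g)"
    by (simp only: s4)
  also have "\<dots> = (I ?Hg \<diamond> ?lam) \<cdot> (?M \<diamond> I ?Hg) \<cdot> (?BB \<diamond> I ?Hg) \<cdot> (?D \<diamond> I ?Hg) \<cdot> (Li X ?e \<diamond> Dl X g)"
    by (simp add: p2)
  also have "\<dots> = (?m \<diamond> (?lam \<cdot> (?m \<diamond> I ?Hg))) \<cdot> (?BB \<diamond> I ?Hg) \<cdot> (?D \<diamond> I ?Hg) \<cdot> (Li X ?e \<diamond> Dl X g)"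
    by (rule cmp_cong3[OF p1]) simp_all
  also have "\<dots> = (?m \<diamond> (?lam \<cdot> (?m \<diamond> I ?Hg))) \<cdot> (?BB \<diamond> I ?Hg) \<cdot> (?Le \<diamond> ((I ?Hg \<diamond> Dl X g) \<cdot> Dl X g))"
    by (simp only: p3)
  also have "\<dots> = (?m \<diamond> ?Y) \<cdot> (?BB \<diamond> I ?Hg) \<cdot> (?Le \<diamond> ((I ?Hg \<diamond> Dl X g) \<cdot> Dl X g))"
    by (simp only: p4)
  also have "\<dots> = (?m \<diamond> ?Y) \<cdot> (I (?H1 \<otimes> ?Hg) \<diamond> I ?H1 \<diamond> Dl X g) \<cdot> ?BB \<cdot> (?Le \<diamond> Dl X g)"
    by (simp only: p5)
  also have "\<dots> = (?m \<diamond> (?l \<cdot> mu X ?e ?e \<cdot> (I ?H1 \<diamond> (?P \<cdot> Dl X g)))) \<cdot> ?BB \<cdot> (?Le \<diamond> Dl X g)"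
    by (rule cmp_cong3[OF p6]) simp_all
  also have "\<dots> = (?m \<diamond> ?l \<diamond> ep X g) \<cdot> ?BB \<cdot> (?Le \<diamond> Dl X g)"
    by (simp only: p7)
  also have "\<dots> = I ?Hg"
    by (simp only: p8 p9 p10)
  finally show ?thesis .
qed

end
context HA begin

lemma part1: "rot C G X g g U (HH X g) (Dl X g) = Dl X g"
proof -
  let ?Hg = "HH X g"
  let ?lam = "formL C G X g"
  let ?Lam = "coformL C X g"
  have r: "rot C G X g g U ?Hg (Dl X g) = (I (?Hg \<otimes> ?Hg) \<diamond> ?lam) \<cdot> ((I ?Hg \<diamond> Dl X g) \<diamond> I ?Hg) \<cdot> (?Lam \<diamond> I ?Hg)"
    unfolding rot_def by (simp only: tob_U)
  have a1: "((I ?Hg \<diamond> Dl X g) \<diamond> I ?Hg) \<cdot> (?Lam \<diamond> I ?Hg) = ((I ?Hg \<diamond> Dl X g) \<cdot> ?Lam) \<diamond> I ?Hg"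
    by (subst interchange) simp_all
  have a2: "((Dl X g \<diamond> I ?Hg) \<diamond> I ?Hg) \<cdot> (?Lam \<diamond> I ?Hg) = ((Dl X g \<diamond> I ?Hg) \<cdot> ?Lam) \<diamond> I ?Hg"
    by (subst interchange) simp_all
  have a3: "(I ?Hg \<diamond> Dl X g) \<cdot> ?Lam = (Dl X g \<diamond> I ?Hg) \<cdot> ?Lam"
    unfolding coformL_def by (subst cmp_cong3[OF coassoc[symmetric]]) simp_all
  have sl: "(I (?Hg \<otimes> ?Hg) \<diamond> ?lam) \<cdot> (Dl X g \<diamond> I (?Hg \<otimes> ?Hg)) = Dl X g \<cdot> (I ?Hg \<diamond> ?lam)"
    using slide[of "Dl X g" ?lam] by simp
  have "rot C G X g g U ?Hg (Dl X g) = (I (?Hg \<otimes> ?Hg) \<diamond> ?lam) \<cdot> ((Dl X g \<diamond> I ?Hg) \<diamond> I ?Hg) \<cdot> (?Lam \<diamond> I ?Hg)"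
    by (simp only: r a1 a2 a3)
  also have "\<dots> = (I (?Hg \<otimes> ?Hg) \<diamond> ?lam) \<cdot> (Dl X g \<diamond> I (?Hg \<otimes> ?Hg)) \<cdot> (?Lam \<diamond> I ?Hg)"
    by simp
  also have "\<dots> = Dl X g \<cdot> (I ?Hg \<diamond> ?lam) \<cdot> (?Lam \<diamond> I ?Hg)"
    by (subst cmp_cong3[OF sl]) simp_all
  also have "\<dots> = Dl X g"
    by (simp only: snake) simp
  finally show ?thesis .
qed

lemma part2:
  assumes gh: "tgt G g = src G h"
  shows "rot C G X g (gm G g h) (HH X h) U (mu X g h)
         = Sb X (ginv G g) \<cdot> mu X h (gm G (ginv G h) (ginv G g)) \<cdot> (I (HH X h) \<diamond> Sa X (gm G g h))"
proof -
  let ?k = "gm G g h"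
  let ?i = "src G g"
  let ?gi = "ginv G g"
  let ?ki = "gm G (ginv G h) (ginv G g)"
  let ?Hg = "HH X g"
  let ?Hh = "HH X h"
  let ?Hk = "HH X ?k"
  let ?l = "lc X ?i"
  let ?M = "mu X h ?ki \<cdot> (I ?Hh \<diamond> Sa X ?k)"
  let ?Lam = "coformL C X g"
  let ?A = "?l \<cdot> mu X g ?gi"
  let ?T = "(I ?Hg \<diamond> ?A) \<cdot> (?Lam \<diamond> I (HH X ?gi))"
  have lamk: "formL C G X ?k = ?l \<cdot> mu X ?k ?ki \<cdot> (I ?Hk \<diamond> Sa X ?k)"
    using gh by (simp add: formL_def)
  have tyM: "Dom C ?M = ?Hh \<otimes> ?Hk" "Cod C ?M = HH X ?gi" using gh by simp_all
  have TS: "?T \<cdot> Sa X g = I ?Hg"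
  proof -
    have a: "(?Lam \<diamond> I (HH X ?gi)) \<cdot> Sa X g = (I (?Hg \<otimes> ?Hg) \<diamond> Sa X g) \<cdot> (?Lam \<diamond> I ?Hg)"
      using tm_split2[of ?Lam "Sa X g"] tm_split1[of ?Lam "Sa X g"] by simp
    have b0: "(I ?Hg \<diamond> ?A) \<cdot> (I ?Hg \<diamond> (I ?Hg \<diamond> Sa X g)) = I ?Hg \<diamond> formL C G X g"
      by (subst interchange) (simp_all add: formL_def)
    have b: "(I ?Hg \<diamond> ?A) \<cdot> (I (?Hg \<otimes> ?Hg) \<diamond> Sa X g) = I ?Hg \<diamond> formL C G X g"
      using b0 by simp
    have "?T \<cdot> Sa X g = (I ?Hg \<diamond> ?A) \<cdot> (?Lam \<diamond> I (HH X ?gi)) \<cdot> Sa X g"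
      by (rule cmp_assoc) simp_all
    also have "\<dots> = (I ?Hg \<diamond> ?A) \<cdot> (I (?Hg \<otimes> ?Hg) \<diamond> Sa X g) \<cdot> (?Lam \<diamond> I ?Hg)"
      by (simp only: a)
    also have "\<dots> = (I ?Hg \<diamond> formL C G X g) \<cdot> (?Lam \<diamond> I ?Hg)"
      by (subst cmp_cong3[OF b]) simp_all
    also have "\<dots> = I ?Hg" by (rule snake)
    finally show ?thesis .
  qed
  have Tval: "?T = Sb X ?gi"
  proof -
    have si: "Sa X g \<cdot> Sb X ?gi = I (HH X ?gi)" using Sinv[of ?gi] by simp
    have "?T = ?T \<cdot> (Sa X g \<cdot> Sb X ?gi)" using si by simp
    also have "\<dots> = (?T \<cdot> Sa X g) \<cdot> Sb X ?gi" by (rule cmp_assoc[symmetric]) simp_all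
    also have "\<dots> = Sb X ?gi" using TS by simp
    finally show ?thesis .
  qed
  have F: "formL C G X ?k \<cdot> (mu X g h \<diamond> I ?Hk) = ?A \<cdot> (I ?Hg \<diamond> ?M)"
  proof -
    have a: "(I ?Hk \<diamond> Sa X ?k) \<cdot> (mu X g h \<diamond> I ?Hk) = (mu X g h \<diamond> I (HH X ?ki)) \<cdot> (I (?Hg \<otimes> ?Hh) \<diamond> Sa X ?k)"
      using slide[of "mu X g h" "Sa X ?k"] gh by simp
    have b: "mu X ?k ?ki \<cdot> (mu X g h \<diamond> I (HH X ?ki)) = mu X g ?gi \<cdot> (I ?Hg \<diamond> mu X h ?ki)"
      using massoc[of g h ?ki] gh by simp
    have c0: "(I ?Hg \<diamond> mu X h ?ki) \<cdot> (I ?Hg \<diamond> (I ?Hh \<diamond> Sa X ?k)) = I ?Hg \<diamond> ?M"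
      using gh by (subst interchange) simp_all
    have c: "(I ?Hg \<diamond> mu X h ?ki) \<cdot> (I (?Hg \<otimes> ?Hh) \<diamond> Sa X ?k) = I ?Hg \<diamond> ?M"
      using c0 by simp
    have "formL C G X ?k \<cdot> (mu X g h \<diamond> I ?Hk) = ?l \<cdot> mu X ?k ?ki \<cdot> (I ?Hk \<diamond> Sa X ?k) \<cdot> (mu X g h \<diamond> I ?Hk)"
      using gh by (simp add: lamk)
    also have "\<dots> = ?l \<cdot> mu X ?k ?ki \<cdot> (mu X g h \<diamond> I (HH X ?ki)) \<cdot> (I (?Hg \<otimes> ?Hh) \<diamond> Sa X ?k)"
      by (simp only: a)
    also have "\<dots> = ?l \<cdot> mu X g ?gi \<cdot> (I ?Hg \<diamond> mu X h ?ki) \<cdot> (I (?Hg \<otimes> ?Hh) \<diamond> Sa X ?k)"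
      using gh by (subst cmp_cong4[OF b]) simp_all
    also have "\<dots> = ?l \<cdot> mu X g ?gi \<cdot> (I ?Hg \<diamond> ?M)"
      by (simp only: c)
    also have "\<dots> = ?A \<cdot> (I ?Hg \<diamond> ?M)"
      by (rule cmp_assoc[symmetric]) (use gh in simp_all)
    finally show ?thesis .
  qed
  have r: "rot C G X g ?k ?Hh U (mu X g h) = (I ?Hg \<diamond> formL C G X ?k) \<cdot> ((I ?Hg \<diamond> mu X g h) \<diamond> I ?Hk) \<cdot> (?Lam \<diamond> I (?Hh \<otimes> ?Hk))"
    unfolding rot_def by (simp only: tob_U)
  have m1: "(I ?Hg \<diamond> formL C G X ?k) \<cdot> ((I ?Hg \<diamond> mu X g h) \<diamond> I ?Hk) = I ?Hg \<diamond> (?A \<cdot> (I ?Hg \<diamond> ?M))"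
    using gh by (simp only: tm_assoc) (subst interchange; simp add: F)
  have m2: "I ?Hg \<diamond> (?A \<cdot> (I ?Hg \<diamond> ?M)) = (I ?Hg \<diamond> ?A) \<cdot> (I (?Hg \<otimes> ?Hg) \<diamond> ?M)"
    using tm_cmp_r[of ?A "I ?Hg \<diamond> ?M" "I ?Hg"] gh by simp
  have m3: "(I (?Hg \<otimes> ?Hg) \<diamond> ?M) \<cdot> (?Lam \<diamond> I (?Hh \<otimes> ?Hk)) = (?Lam \<diamond> I (HH X ?gi)) \<cdot> ?M"
    using slide[of ?Lam ?M] tyM by simp
  have "rot C G X g ?k ?Hh U (mu X g h) = (I ?Hg \<diamond> (?A \<cdot> (I ?Hg \<diamond> ?M))) \<cdot> (?Lam \<diamond> I (?Hh \<otimes> ?Hk))"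
    using gh by (subst r, subst cmp_cong3[OF m1]) simp_all
  also have "\<dots> = (I ?Hg \<diamond> ?A) \<cdot> (I (?Hg \<otimes> ?Hg) \<diamond> ?M) \<cdot> (?Lam \<diamond> I (?Hh \<otimes> ?Hk))"
    using gh by (simp only: m2) (rule cmp_assoc; simp)
  also have "\<dots> = (I ?Hg \<diamond> ?A) \<cdot> (?Lam \<diamond> I (HH X ?gi)) \<cdot> ?M"
    by (simp only: m3)
  also have "\<dots> = ?T \<cdot> ?M"
    by (rule cmp_assoc[symmetric]) (use gh in simp_all)
  also have "\<dots> = Sb X ?gi \<cdot> ?M" by (simp only: Tval)
  finally show ?thesis .
qed

end

theorem lemma5p7:
  fixes C :: "('o, 'm) bmc" and G :: "('g, 'i) gpd" and X :: "('o, 'm, 'g, 'i) hopfG"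
    and g h :: 'g
  assumes "hopf_G_algebra_int C G X"
    and "tgt G g = src G h"
  shows "rot C G X g g (Uo C) (HH X g) (Dl X g) = Dl X g
       \<and> rot C G X g (gm G g h) (HH X h) (Uo C) (mu X g h)
         = Cmp C (Sb X (ginv G g))
             (Cmp C (mu X h (gm G (ginv G h) (ginv G g)))
                (Tm C (Idm C (HH X h)) (Sa X (gm G g h))))"
proof -
  interpret HA C G X using assms(1) by (rule HA.intro)
  show ?thesis using part1[of g] part2[OF assms(2)] by simp
qed

end
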